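(* In the setting below, for every $H\ge1$, $$\|\widehat{Q}_0-Q_0\|_\infty\le\sum_{h=0}^{H-1}\gamma^{h+1}L\,\big\|(\widehat{P}_\mathcal{K}-P_\mathcal{K})\widehat{V}_{h+1}\big\|_\infty.$$
   Context: $M=(\mathcal{S},\mathcal{A},P,r,\gamma)$ is a discounted MDP (finite $\mathcal{S},\mathcal{A}$, $r\in[0,1]$, $\gamma\in(0,1)$) with $P(s'|s,a)=\sum_{k}\phi_k(s,a)\psi_k(s')$. Regularity assumption: there are a set $\mathcal{K}=\{(s_k,a_k)\}$ of state-action pairs and $L\ge1$ such that for every $(s,a)$ there are real coefficients $\lambda_k^{s,a}$ with $\phi(s,a)=\sum_{k\in\mathcal{K}}\lambda_k^{s,a}\phi(s_k,a_k)$ and $\sum_{k\in\mathcal{K}}|\lambda_k^{s,a}|\le L$. $P_\mathcal{K}$ is the $|\mathcal{K}|\times|\mathcal{S}|$ matrix of rows $P(\cdot|s_k,a_k)$; $\widehat{P}_\mathcal{K}$ has rows the empirical distributions of $N$ samples from $P(\cdot|s_k,a_k)$; $\widehat{P}(s'|s,a)=\sum_k\lambda_k^{s,a}\widehat{P}_\mathcal{K}(s'|s_k,a_k)$ (possibly with negative entries). Value iteration for $H$ steps: $\widehat{V}_H=V_H=0$; for $h=H-1,\dots,0$, $\widehat{Q}_h=r+\gamma\widehat{P}\widehat{V}_{h+1}$, $\widehat{V}_h(s)=\max_a\widehat{Q}_h(s,a)$, and $Q_h=r+\gamma PV_{h+1}$, $V_h(s)=\max_aQ_h(s,a)$. For $V:\mathcal{S}\to\mathbb{R}$,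 $(\widehat{P}_\mathcal{K}-P_\mathcal{K})V$ is the vector $k\mapsto\sum_{s'}(\widehat{P}_\mathcal{K}(s'|s_k,a_k)-P(s'|s_k,a_k))V(s')$. *)

theory Defs
  imports Complex_Main
begin

text \<open>Finite-horizon value iteration with a (possibly signed) transition kernel
  Pm s a s'. Vit n is the value function with n steps remaining, so that
  V_h = Vit (H - h) and V_H = Vit 0 = 0.\<close>

fun Vit :: "('s \<Rightarrow> 'a::finite \<Rightarrow> 's::finite \<Rightarrow> real) \<Rightarrow> ('s \<Rightarrow> 'a \<Rightarrow> real) \<Rightarrow> real \<Rightarrow> nat \<Rightarrow> 's \<Rightarrow> real" where
  "Vit Pm r \<gamma> 0 s = 0"
| "Vit Pm r \<gamma> (Suc n) s =
     Max (range (\<lambda>a. r s a + \<gamma> * (\<Sum>s'\<in>UNIV. Pm s a s' * Vit Pm r \<gamma> n s')))"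

definition Vh :: "('s \<Rightarrow> 'a::finite \<Rightarrow> 's::finite \<Rightarrow> real) \<Rightarrow> ('s \<Rightarrow> 'a \<Rightarrow> real) \<Rightarrow> real \<Rightarrow> nat \<Rightarrow> nat \<Rightarrow> 's \<Rightarrow> real" where
  "Vh Pm r \<gamma> H h = Vit Pm r \<gamma> (H - h)"

definition Qh :: "('s \<Rightarrow> 'a::finite \<Rightarrow> 's::finite \<Rightarrow> real) \<Rightarrow> ('s \<Rightarrow> 'a \<Rightarrow> real) \<Rightarrow> real \<Rightarrow> nat \<Rightarrow> nat \<Rightarrow> 's \<Rightarrow> 'a \<Rightarrow> real" where
  "Qh Pm r \<gamma> H h s a = r s a + \<gamma> * (\<Sum>s'\<in>UNIV. Pm s a s' * Vh Pm r \<gamma> H (Suc h) s')"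

definition supnorm :: "('x::finite \<Rightarrow> real) \<Rightarrow> real" where
  "supnorm f = Max (range (\<lambda>x. \<bar>f x\<bar>))"

definition empirical :: "nat \<Rightarrow> (nat \<Rightarrow> 's) \<Rightarrow> 's \<Rightarrow> real" where
  "empirical N samp s' = real (card {i. i < N \<and> samp i = s'}) / real N"

end

theory Submission
  imports Defs
begin

lemma supnorm_ge: "\<bar>f x\<bar> \<le> supnorm f"
  unfolding supnorm_def by (rule Max_ge) auto

lemma supnorm_nonneg: "0 \<le> supnorm f"
  using supnorm_ge[of f undefined] by linarith

lemma supnorm_le: "(\<And>x. \<bar>f x\<bar> \<le> c) \<Longrightarrow> supnorm f \<le> c"
  unfolding supnorm_def by (subst Max_le_iff) auto

lemma max_diff:
  fixes f g :: "'a::finite \<Rightarrow> real"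
  assumes "\<And>a. \<bar>f a - g a\<bar> \<le> c"
  shows "\<bar>Max (range f) - Max (range g)\<bar> \<le> c"
proof -
  have fin: "finite (range f)" "finite (range g)" by auto
  have "Max (range f) \<in> range f" using fin by (intro Max_in) auto
  then obtain a where a: "Max (range f) = f a" by (metis imageE)
  have "Max (range g) \<in> range g" using fin by (intro Max_in) auto
  then obtain b where b: "Max (range g) = g b" by (metis imageE)
  have "g a \<le> Max (range g)" using fin by (intro Max_ge) auto
  moreover have "f b \<le> Max (range f)" using fin by (intro Max_ge) auto
  moreover have "\<bar>f a - g a\<bar> \<le> c" "\<bar>f b - g b\<bar> \<le> c" using assms by auto
  ultimately show ?thesis using a b by linarith
qed

theorem lemma30:
  fixes P :: "'s::finite \<Rightarrow> 'a::finite \<Rightarrow> 's \<Rightarrow> real"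
    and r :: "'s \<Rightarrow> 'a \<Rightarrow> real"
    and \<gamma> :: real
    and \<phi> :: "'s \<Rightarrow> 'a \<Rightarrow> 'd::finite \<Rightarrow> real"
    and \<psi> :: "'d \<Rightarrow> 's \<Rightarrow> real"
    and sk :: "'k::finite \<Rightarrow> 's" and ak :: "'k \<Rightarrow> 'a"
    and lam :: "'s \<Rightarrow> 'a \<Rightarrow> 'k \<Rightarrow> real"
    and L :: real
    and N :: nat
    and samp :: "'k \<Rightarrow> nat \<Rightarrow> 's"
    and H :: nat
  assumes P_nonneg: "\<And>s a s'. P s a s' \<ge> 0"
    and P_sum: "\<And>s a. (\<Sum>s'\<in>UNIV. P s a s') = 1"
    and r_range: "\<And>s a. 0 \<le> r s a \<and> r s a \<le> 1"
    and gamma: "0 < \<gamma>" "\<gamma> < 1"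
    and lowrank: "\<And>s a s'. P s a s' = (\<Sum>d\<in>UNIV. \<phi> s a d * \<psi> d s')"
    and L_ge: "L \<ge> 1"
    and anchor: "\<And>s a d. \<phi> s a d = (\<Sum>k\<in>UNIV. lam s a k * \<phi> (sk k) (ak k) d)"
    and lam_bound: "\<And>s a. (\<Sum>k\<in>UNIV. \<bar>lam s a k\<bar>) \<le> L"
    and N_pos: "N \<ge> 1"
    and H_pos: "H \<ge> 1"
  defines "PhatK \<equiv> \<lambda>k s'. empirical N (samp k) s'"
    and "PK \<equiv> \<lambda>k s'. P (sk k) (ak k) s'"
    and "Phat \<equiv> \<lambda>s a s'. (\<Sum>k\<in>UNIV. lam s a k * empirical N (samp k) s')"
  shows "supnorm (\<lambda>(s, a). Qh Phat r \<gamma> H 0 s a - Qh P r \<gamma> H 0 s a)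
         \<le> (\<Sum>h<H. \<gamma> ^ (h + 1) * L *
              supnorm (\<lambda>k. \<Sum>s'\<in>UNIV. (PhatK k s' - PK k s') * Vh Phat r \<gamma> H (h + 1) s'))"
proof -
  define E where "E n = supnorm (\<lambda>k. \<Sum>s'\<in>UNIV. (PhatK k s' - PK k s') * Vit Phat r \<gamma> n s')" for n
  define D where "D n = (\<Sum>h<n. \<gamma> ^ (h + 1) * L * E (n - 1 - h))" for n
  have Pdec: "P s a s' = (\<Sum>k\<in>UNIV. lam s a k * PK k s')" for s a s'
  proof -
    have "P s a s' = (\<Sum>d\<in>UNIV. \<Sum>k\<in>UNIV. lam s a k * \<phi> (sk k) (ak k) d * \<psi> d s')"
      by (simp add: lowrank[of s a s'] anchor[of s a] sum_distrib_right)
    also have "\<dots> = (\<Sum>k\<in>UNIV. lam s a k * (\<Sum>d\<in>UNIV. \<phi> (sk k) (ak k) d * \<psi> d s'))"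
      by (subst sum.swap) (simp add: sum_distrib_left mult.assoc)
    finally show ?thesis by (simp add: PK_def lowrank)
  qed
  have key: "\<bar>(\<Sum>s'\<in>UNIV. Phat s a s' * V s') - (\<Sum>s'\<in>UNIV. P s a s' * V s')\<bar>
      \<le> L * supnorm (\<lambda>k. \<Sum>s'\<in>UNIV. (PhatK k s' - PK k s') * V s')" for s a V
  proof -
    let ?g = "\<lambda>k. \<Sum>s'\<in>UNIV. (PhatK k s' - PK k s') * V s'"
    have "(\<Sum>s'\<in>UNIV. Phat s a s' * V s') - (\<Sum>s'\<in>UNIV. P s a s' * V s')
        = (\<Sum>s'\<in>UNIV. \<Sum>k\<in>UNIV. lam s a k * (PhatK k s' - PK k s') * V s')"
    proof -
      have pw: "Phat s a s' * V s' - P s a s' * V s' = (\<Sum>k\<in>UNIV. lam s a k * (PhatK k s' - PK k s') * V s')" for s'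
      proof -
        have "(\<Sum>k\<in>UNIV. lam s a k * (PhatK k s' - PK k s') * V s')
           = (\<Sum>k\<in>UNIV. lam s a k * PhatK k s' * V s' - lam s a k * PK k s' * V s')"
          by (simp add: algebra_simps)
        also have "\<dots> = (\<Sum>k\<in>UNIV. lam s a k * PhatK k s') * V s' - (\<Sum>k\<in>UNIV. lam s a k * PK k s') * V s'"
          by (simp only: sum_subtractf sum_distrib_right)
        finally show ?thesis by (simp add: Phat_def Pdec[of s a s'] PhatK_def)
      qed
      show ?thesis by (simp add: sum_subtractf[symmetric] pw)
    qed
    also have "\<dots> = (\<Sum>k\<in>UNIV. lam s a k * ?g k)"
      by (subst sum.swap) (simp add: sum_distrib_left mult.assoc)
    finally have eq: "(\<Sum>s'\<in>UNIV. Phat s a s' * V s') - (\<Sum>s'\<in>UNIV. P s a s' * V s') = (\<Sum>k\<in>UNIV. lam s a k * ?g k)" .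
    have "\<bar>\<Sum>k\<in>UNIV. lam s a k * ?g k\<bar> \<le> (\<Sum>k\<in>UNIV. \<bar>lam s a k\<bar> * supnorm ?g)"
      by (rule order_trans[OF sum_abs]) (auto intro!: sum_mono mult_left_mono supnorm_ge simp: abs_mult)
    also have "\<dots> \<le> L * supnorm ?g"
      using lam_bound[of s a] supnorm_nonneg[of ?g]
      by (simp add: sum_distrib_right[symmetric] mult_right_mono)
    finally show ?thesis using eq by simp
  qed
  have contr: "\<bar>(\<Sum>s'\<in>UNIV. P s a s' * V s') - (\<Sum>s'\<in>UNIV. P s a s' * W s')\<bar> \<le> c"
    if "\<And>s'. \<bar>V s' - W s'\<bar> \<le> c" for s a V W c
  proof -
    have "\<bar>(\<Sum>s'\<in>UNIV. P s a s' * V s') - (\<Sum>s'\<in>UNIV. P s a s' * W s')\<bar>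
        = \<bar>\<Sum>s'\<in>UNIV. P s a s' * (V s' - W s')\<bar>"
      by (simp add: sum_subtractf[symmetric] algebra_simps)
    also have "\<dots> \<le> (\<Sum>s'\<in>UNIV. P s a s' * c)"
      by (rule order_trans[OF sum_abs]) (auto intro!: sum_mono mult_left_mono that P_nonneg simp: abs_mult abs_of_nonneg[OF P_nonneg])
    also have "\<dots> = c" by (simp add: sum_distrib_right[symmetric] P_sum)
    finally show ?thesis .
  qed
  have step: "\<bar>(r s a + \<gamma> * (\<Sum>s'\<in>UNIV. Phat s a s' * Vit Phat r \<gamma> n s'))
      - (r s a + \<gamma> * (\<Sum>s'\<in>UNIV. P s a s' * Vit P r \<gamma> n s'))\<bar> \<le> \<gamma> * (L * E n + c)"
    if "\<And>s'. \<bar>Vit Phat r \<gamma> n s' - Vit P r \<gamma> n s'\<bar> \<le> c" for s a n c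
  proof -
    have "\<bar>(\<Sum>s'\<in>UNIV. Phat s a s' * Vit Phat r \<gamma> n s') - (\<Sum>s'\<in>UNIV. P s a s' * Vit P r \<gamma> n s')\<bar>
       \<le> \<bar>(\<Sum>s'\<in>UNIV. Phat s a s' * Vit Phat r \<gamma> n s') - (\<Sum>s'\<in>UNIV. P s a s' * Vit Phat r \<gamma> n s')\<bar>
        + \<bar>(\<Sum>s'\<in>UNIV. P s a s' * Vit Phat r \<gamma> n s') - (\<Sum>s'\<in>UNIV. P s a s' * Vit P r \<gamma> n s')\<bar>"
      by linarith
    also have "\<dots> \<le> L * E n + c"
      using key[of s a "Vit Phat r \<gamma> n"] contr[where V="Vit Phat r \<gamma> n" and W="Vit P r \<gamma> n" and c=c and s=s and a=a, OF that] unfolding E_def by linarith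
    finally have "\<bar>(\<Sum>s'\<in>UNIV. Phat s a s' * Vit Phat r \<gamma> n s') - (\<Sum>s'\<in>UNIV. P s a s' * Vit P r \<gamma> n s')\<bar> \<le> L * E n + c" .
    then have "\<gamma> * \<bar>(\<Sum>s'\<in>UNIV. Phat s a s' * Vit Phat r \<gamma> n s') - (\<Sum>s'\<in>UNIV. P s a s' * Vit P r \<gamma> n s')\<bar> \<le> \<gamma> * (L * E n + c)"
      using gamma by (intro mult_left_mono) auto
    then show ?thesis by (simp add: right_diff_distrib[symmetric] abs_mult gamma(1) less_imp_le)
  qed
  have Drec: "D (Suc n) = \<gamma> * (L * E n + D n)" for n
    unfolding D_def
    by (subst sum.lessThan_Suc_shift) (simp add: sum_distrib_left algebra_simps)
  have Vbound: "\<bar>Vit Phat r \<gamma> n s - Vit P r \<gamma> n s\<bar> \<le> D n" for n s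
  proof (induction n arbitrary: s)
    case 0 then show ?case by (simp add: D_def)
  next
    case (Suc n)
    show ?case unfolding Vit.simps Drec
      by (rule max_diff) (rule step[OF Suc])
  qed
  obtain m where m: "H = Suc m" using H_pos by (cases H) auto
  have "supnorm (\<lambda>(s, a). Qh Phat r \<gamma> H 0 s a - Qh P r \<gamma> H 0 s a) \<le> D H"
    unfolding m Drec
  proof (rule supnorm_le)
    fix x :: "'s \<times> 'a"
    obtain s a where x: "x = (s, a)" by (cases x)
    show "\<bar>(case x of (s, a) \<Rightarrow> Qh Phat r \<gamma> (Suc m) 0 s a - Qh P r \<gamma> (Suc m) 0 s a)\<bar> \<le> \<gamma> * (L * E m + D m)"
    proof -
      have "\<bar>(r s a + \<gamma> * (\<Sum>s'\<in>UNIV. Phat s a s' * Vit Phat r \<gamma> m s'))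
      - (r s a + \<gamma> * (\<Sum>s'\<in>UNIV. P s a s' * Vit P r \<gamma> m s'))\<bar> \<le> \<gamma> * (L * E m + D m)"
        by (rule step) (rule Vbound)
      then show ?thesis by (simp only: x prod.case Qh_def Vh_def diff_Suc_Suc diff_zero)
    qed
  qed
  also have "D H = (\<Sum>h<H. \<gamma> ^ (h + 1) * L *
              supnorm (\<lambda>k. \<Sum>s'\<in>UNIV. (PhatK k s' - PK k s') * Vh Phat r \<gamma> H (h + 1) s'))"
  proof -
    have e: "\<And>h. H - 1 - h = H - (h + 1)" by simp
    show ?thesis unfolding D_def E_def Vh_def e ..
  qed
  finally show ?thesis .
qed

end
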